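(* Fix $j\ge1$. For every $k\ge6$ with $k+1\ge j$, $A(k)<C(k)$, where $$C(k)=\log\big((k+1)(\log(k+1)+\log\log(k+1))\big)\cdot\exp\!\left(c_1-\frac1{p_j}+\frac{5}{\log\big((k+1)(\log(k+1)+\log\log(k+1)-1)\big)}\right).$$
   Context: $p_1=2<p_2=3<\cdots$ is the increasing enumeration of the primes. For fixed $j$ and $k\ge j-1$, $A(k)=\prod_{1\le\ell\le k+1,\ \ell\ne j}\frac{p_\ell+1}{p_\ell}$. The constant $c_1\approx0.261497$ is the Meissel–Mertens constant, $c_1=\lim_{x\to\infty}\big(\sum_{p\le x}1/p-\log\log x\big)$. *)

theory Defs
  imports "HOL-Analysis.Analysis" "HOL-Library.Infinite_Set"
begin

text \<open>The l-th prime (1-indexed): pr 1 = 2, pr 2 = 3, ...\<close>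
definition pr :: "nat \<Rightarrow> nat" where
  "pr l = enumerate {p. prime p} (l - 1)"

definition mertens_c1 :: real where
  "mertens_c1 = Lim at_top (\<lambda>x::real. (\<Sum>p | prime p \<and> real p \<le> x. 1 / real p) - ln (ln x))"

definition A_prod :: "nat \<Rightarrow> nat \<Rightarrow> real" where
  "A_prod j k = (\<Prod>l \<in> {1..k+1} - {j}. (real (pr l) + 1) / real (pr l))"

definition C_bound :: "nat \<Rightarrow> nat \<Rightarrow> real" where
  "C_bound j k = ln ((real k + 1) * (ln (real k + 1) + ln (ln (real k + 1)))) *
     exp (mertens_c1 - 1 / real (pr j) +
          5 / ln ((real k + 1) * (ln (real k + 1) + ln (ln (real k + 1)) - 1)))"

end

theory Submission
  imports Defs "HOL-Real_Asymp.Real_Asymp"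
begin


lemma mult_le_bound:
  fixes p m :: nat
  assumes "prime p" "m > 0"
  shows "multiplicity p m < m + 1" 
proof -
  have "p ^ multiplicity p m dvd m" by (simp add: multiplicity_dvd)
  hence "p ^ multiplicity p m \<le> m" using assms by (simp add: dvd_imp_le)
  moreover have "multiplicity p m < 2 ^ multiplicity p m" by simp
  moreover have "(2::nat) ^ multiplicity p m \<le> p ^ multiplicity p m"
    using prime_ge_2_nat[OF assms(1)] by (simp add: power_mono)
  ultimately show ?thesis by linarith
qed

lemma mult_card:
  fixes p m B :: nat
  assumes "prime p" "m > 0" "m \<le> B"
  shows "multiplicity p m = card {k\<in>{1..B}. p ^ k dvd m}"
proof -
  have "{k\<in>{1..B}. p ^ k dvd m} = {1..multiplicity p m}"
    using mult_le_bound[OF assms(1,2)] assms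
    by (auto intro: multiplicity_dvd' intro!: multiplicity_geI simp: prime_gt_1_nat)
  thus ?thesis by simp
qed

lemma Suc_div_ind:
  fixes n q :: nat assumes "q > 0"
  shows "Suc n div q = n div q + (if q dvd Suc n then 1 else 0)"
  using assms by (auto simp: div_Suc dvd_eq_mod_eq_0)

lemma legendre:
  fixes p n B :: nat
  assumes "prime p" "n \<le> B"
  shows "multiplicity p (fact n) = (\<Sum>k=1..B. n div p ^ k)"
  using assms(2)
proof (induction n)
  case 0 then show ?case by simp
next
  case (Suc n)
  have pk: "p ^ k > 0" for k using prime_gt_0_nat[OF assms(1)] by simp
  have "multiplicity p (fact (Suc n) :: nat) = multiplicity p (Suc n * fact n)"
    by (simp add: fact_Suc)
  also have "\<dots> = multiplicity p (Suc n) + multiplicity p (fact n :: nat)"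
    using assms(1) by (subst prime_elem_multiplicity_mult_distrib) auto
  also have "multiplicity p (Suc n) = card {k\<in>{1..B}. p ^ k dvd Suc n}"
    using mult_card[OF assms(1), of "Suc n" B] Suc.prems by simp
  also have "\<dots> = (\<Sum>k=1..B. (if p ^ k dvd Suc n then 1 else 0))"
    by (simp add: sum.If_cases Int_def conj_commute)
  also have "multiplicity p (fact n :: nat) = (\<Sum>k=1..B. n div p ^ k)"
    using Suc by simp
  finally show ?case
    by (simp add: Suc_div_ind[OF pk] sum.distrib)
qed

lemma ln_fact_sum:
  "ln (fact n :: real) = (\<Sum>p | prime p \<and> p \<le> n. real (multiplicity p (fact n :: nat)) * ln (real p))"
proof -
  have pos: "(fact n :: nat) > 0" by simp
  have "real (fact n :: nat) = real (\<Prod>p \<in> prime_factors (fact n :: nat). p ^ multiplicity p (fact n :: nat))"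
    using prime_factorization_nat[OF pos] by simp
  also have "prime_factors (fact n :: nat) = {p. prime p \<and> p \<le> n}"
    by (auto simp: prime_factors_fact prime_ge_2_nat)
  finally have e: "real (fact n :: nat) = (\<Prod>p | prime p \<and> p \<le> n. real p ^ multiplicity p (fact n :: nat))"
    by simp
  have "ln (fact n :: real) = ln (real (fact n :: nat))" by simp
  also have "\<dots> = (\<Sum>p | prime p \<and> p \<le> n. ln (real p ^ multiplicity p (fact n :: nat)))"
    unfolding e by (rule ln_prod) (auto simp: prime_gt_0_nat)
  also have "\<dots> = (\<Sum>p | prime p \<and> p \<le> n. real (multiplicity p (fact n :: nat)) * ln (real p))"
    by (intro sum.cong refl) (auto simp: ln_realpow prime_gt_0_nat)
  finally show ?thesis .
qed



lemma ln_fact_upper: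
  assumes "n \<ge> 1"
  shows "ln (fact n :: real) \<le> real n * ln (real n) - real n + 1 + ln (real n)"
  using assms
proof (induction n rule: nat_induct_at_least)
  case base then show ?case by simp
next
  case (Suc n)
  have n: "real n \<ge> 1" using Suc by simp
  have key: "ln (1 + 1 / real n) \<ge> 1 / (real n + 1)"
  proof -
    have "ln (1 + 1/real n) = - ln (real n / (real n + 1))"
      using n by (simp add: ln_div field_simps)
    moreover have "ln (real n / (real n + 1)) \<le> real n / (real n + 1) - 1"
      using n by (intro ln_le_minus_one) simp
    moreover have "real n / (real n + 1) - 1 = - (1 / (real n + 1))" using n by (simp add: field_simps)
    ultimately show ?thesis by linarith
  qed
  have e: "ln (real n + 1) = ln (real n) + ln (1 + 1 / real n)"
  proof -
    have "real n + 1 = real n * (1 + 1/real n)" using n by (simp add: field_simps)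
    moreover have "ln (real n * (1 + 1/real n)) = ln (real n) + ln (1 + 1/real n)"
      using n by (intro ln_mult_pos) (auto intro: add_pos_nonneg)
    ultimately show ?thesis by simp
  qed
  have "ln (fact (Suc n) :: real) = ln (real n + 1) + ln (fact n)"
    by (simp add: fact_Suc ln_mult add.commute)
  also have "\<dots> \<le> ln (real n + 1) + (real n * ln (real n) - real n + 1 + ln (real n))"
    using Suc.IH by simp
  also have "\<dots> \<le> (real n + 1) * ln (real n + 1) - (real n + 1) + 1 + ln (real n + 1)"
  proof -
    have "(real n + 1) * ln (1 + 1/real n) \<ge> 1"
      using key n by (simp add: field_simps)
    thus ?thesis unfolding e by (simp add: algebra_simps)
  qed
  finally show ?case by (simp add: add.commute)
qed

lemma ln_fact_lower:
  assumes "n \<ge> 1"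
  shows "real n * ln (real n) - real n + 1 \<le> ln (fact n :: real)"
  using assms
proof (induction n rule: nat_induct_at_least)
  case base then show ?case by simp
next
  case (Suc n)
  have n: "real n \<ge> 1" using Suc by simp
  have key: "ln (1 + 1 / real n) \<le> 1 / real n"
    using n by (intro ln_add_one_self_le_self) simp
  have e: "ln (real n + 1) = ln (real n) + ln (1 + 1 / real n)"
  proof -
    have "real n + 1 = real n * (1 + 1/real n)" using n by (simp add: field_simps)
    moreover have "ln (real n * (1 + 1/real n)) = ln (real n) + ln (1 + 1/real n)"
      using n by (intro ln_mult_pos) (auto intro: add_pos_nonneg)
    ultimately show ?thesis by simp
  qed
  have "(real n + 1) * ln (real n + 1) - (real n + 1) + 1
        \<le> ln (real n + 1) + (real n * ln (real n) - real n + 1)"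
  proof -
    have "real n * ln (1 + 1/real n) \<le> 1"
      using key n by (simp add: field_simps)
    thus ?thesis unfolding e by (simp add: algebra_simps)
  qed
  also have "\<dots> \<le> ln (real n + 1) + ln (fact n)"
    using Suc.IH by simp
  also have "\<dots> = ln (fact (Suc n) :: real)"
    by (simp add: fact_Suc ln_mult add.commute)
  finally show ?case by (simp add: add.commute)
qed

definition prim :: "nat \<Rightarrow> nat" where
  "prim n = (\<Prod>p | prime p \<and> p \<le> n. p)"

lemma primes_le_finite [simp]: "finite {p::nat. prime p \<and> p \<le> n}"
  by (rule finite_subset[of _ "{..n}"]) auto

lemma prod_primes_dvd:
  fixes c :: nat
  assumes "c > 0" "finite S" "\<And>p. p \<in> S \<Longrightarrow> prime p \<and> p dvd c"
  shows "(\<Prod>p\<in>S. p) dvd c"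
proof -
  have "(\<Prod>p\<in>S. p) dvd (\<Prod>p\<in>S. p ^ multiplicity p c)"
  proof (rule prod_dvd_prod)
    fix p assume "p \<in> S"
    hence pp: "prime p" and pd: "p dvd c" using assms(3) by auto
    have "\<not> is_unit p" using prime_gt_1_nat[OF pp] by simp
    hence "multiplicity p c \<ge> 1" using assms(1) pd
      by (intro multiplicity_geI) auto
    thus "p dvd p ^ multiplicity p c" by (simp add: dvd_power)
  qed
  also have "\<dots> dvd (\<Prod>p \<in> prime_factors c. p ^ multiplicity p c)"
    using assms by (intro prod_dvd_prod_subset) (auto simp: in_prime_factors_iff)
  also have "\<dots> = c" using prime_factorization_nat[OF assms(1)] by simp
  finally show ?thesis .
qed

lemma binom_odd_le: "(2*m+1) choose m \<le> 4 ^ m"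
proof -
  have "(2*m+1) choose m \<le> (\<Sum>k\<le>m. (2 * m + 1 choose k))"
    by (rule member_le_sum) auto
  also have "\<dots> = 2 ^ (2*m)" by (rule binomial_r_part_sum)
  also have "\<dots> = 4 ^ m" by (simp add: power_mult)
  finally show ?thesis .
qed

lemma prim_le: "prim n \<le> 4 ^ n"
proof (induction n rule: less_induct)
  case (less n)
  show ?case
  proof (cases "n \<le> 2")
    case True
    then consider "n = 0" | "n = 1" | "n = 2" by linarith
    then show ?thesis
    proof cases
      case 1
      have "{p::nat. prime p \<and> p \<le> n} = {}" using 1 prime_gt_0_nat by auto
      then have "prim n = 1" unfolding prim_def by (metis prod.empty)
      then show ?thesis by simp
    next
      case 2
      have "{p::nat. prime p \<and> p \<le> n} = {}" using 2 prime_gt_0_nat by (auto simp: le_Suc_eq)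
      then have "prim n = 1" unfolding prim_def by (metis prod.empty)
      then show ?thesis by simp
    next
      case 3
      have "{p::nat. prime p \<and> p \<le> n} = {2}" using 3 prime_ge_2_nat by (auto simp: le_antisym)
      then show ?thesis unfolding prim_def using 3 by simp
    qed
  next
    case False
    show ?thesis
    proof (cases "even n")
      case True
      have "{p::nat. prime p \<and> p \<le> n} = {p. prime p \<and> p \<le> n - 1}"
      proof -
        have "\<not> prime n" using True False by (metis not_less prime_odd_nat)
        have "\<And>p. prime p \<Longrightarrow> p \<le> n \<longleftrightarrow> p \<le> n - 1"
        proof -
          fix p :: nat assume "prime p"
          hence "p \<noteq> n" using \<open>\<not> prime n\<close> by metis
          thus "p \<le> n \<longleftrightarrow> p \<le> n - 1" using False by arith
        qed
        thus ?thesis by blast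
      qed
      hence "prim n = prim (n - 1)" unfolding prim_def by (rule arg_cong)
      also have "\<dots> \<le> 4 ^ (n - 1)" using less.IH[of "n-1"] False by linarith
      also have "\<dots> \<le> 4 ^ n" by (intro power_increasing) auto
      finally show ?thesis .
    next
      case odd: False
      then obtain m where n: "n = 2*m+1" by (metis oddE)
      with False have m: "m \<ge> 1" by simp
      define Q where "Q = {p::nat. prime p \<and> m+1 < p \<and> p \<le> 2*m+1}"
      have split: "{p::nat. prime p \<and> p \<le> n} = {p. prime p \<and> p \<le> m+1} \<union> Q"
        unfolding Q_def n by auto
      have disj: "{p::nat. prime p \<and> p \<le> m+1} \<inter> Q = {}" unfolding Q_def by auto
      have finQ: "finite Q" unfolding Q_def by (rule finite_subset[of _ "{..2*m+1}"]) auto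
      have Qle: "(\<Prod>p\<in>Q. p) \<le> (2*m+1) choose m"
      proof (rule dvd_imp_le)
        show "(\<Prod>p\<in>Q. p) dvd (2*m+1) choose m"
        proof (rule prod_primes_dvd)
          show "(2*m+1) choose m > 0" by simp
          show "finite Q" by fact
          fix p assume p: "p \<in> Q"
          hence pp: "prime p" unfolding Q_def by simp
          have "fact m * fact (2*m+1-m) * ((2*m+1) choose m) = (fact (2*m+1) :: nat)"
            by (rule binomial_fact_lemma) simp
          moreover have "p \<le> 2*m+1" using p unfolding Q_def by simp
          hence "p dvd (fact (2*m+1) :: nat)" using prime_dvd_fact_iff[OF pp] by blast
          ultimately have "p dvd fact m * fact (m+1) * ((2*m+1) choose m)"
            by (simp add: Suc_diff_le)
          moreover have "\<not> p dvd (fact m :: nat)" "\<not> p dvd (fact (m+1) :: nat)"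
            using p prime_dvd_fact_iff[OF pp, of m] prime_dvd_fact_iff[OF pp, of "m+1"]
            unfolding Q_def by auto
          ultimately show "prime p \<and> p dvd (2*m+1) choose m" using pp
            by (auto simp: prime_dvd_mult_iff)
        qed
      qed simp
      have "prim n = prim (m+1) * (\<Prod>p\<in>Q. p)"
        unfolding prim_def split by (rule prod.union_disjoint) (use disj finQ in auto)
      also have "prim (m+1) * (\<Prod>p\<in>Q. p) \<le> prim (m+1) * ((2*m+1) choose m)"
        using Qle by (rule mult_left_mono) simp
      also have "\<dots> \<le> 4 ^ (m+1) * 4 ^ m"
      proof (rule mult_mono)
        show "prim (m+1) \<le> 4 ^ (m+1)" using less.IH[of "m+1"] n m by linarith
      qed (use binom_odd_le[of m] in auto)
      also have "\<dots> = 4 ^ n" by (simp add: n power_add[symmetric])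
      finally show ?thesis .
    qed
  qed
qed

definition theta :: "nat \<Rightarrow> real" where
  "theta n = (\<Sum>p | prime p \<and> p \<le> n. ln (real p))"

lemma theta_le: "theta n \<le> real n * ln 4"
proof -
  have "theta n = ln (real (prim n))"
    unfolding theta_def prim_def
    by (subst ln_prod[symmetric]) (auto simp: prime_gt_0_nat)
  also have "\<dots> \<le> ln (4 ^ n)"
  proof -
    have "real (prim n) \<le> 4 ^ n" using prim_le[of n] by (metis of_nat_le_iff of_nat_numeral of_nat_power)
    moreover have "real (prim n) > 0" by (auto simp: prim_def prime_gt_0_nat intro!: prod_pos)
    ultimately show ?thesis by simp
  qed
  also have "\<dots> = real n * ln 4" by (simp add: ln_realpow)
  finally show ?thesis .
qed



definition Rs :: "nat \<Rightarrow> real" where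
  "Rs n = (\<Sum>p | prime p \<and> p \<le> n. ln (real p) / real p)"

definition Ts :: "nat \<Rightarrow> real" where
  "Ts n = (\<Sum>p | prime p \<and> p \<le> n. ln (real p) / (real p * (real p - 1)))"

lemma geom_id:
  fixes x :: real
  shows "(1 - x) * (\<Sum>k=1..B. x ^ k) = x - x ^ (B + 1)"
proof (induction B)
  case 0 then show ?case by simp
next
  case (Suc B)
  have "(\<Sum>k=1..Suc B. x ^ k) = (\<Sum>k=1..B. x ^ k) + x ^ Suc B" by simp
  hence "(1 - x) * (\<Sum>k=1..Suc B. x ^ k) = (1 - x) * (\<Sum>k=1..B. x ^ k) + (1 - x) * x ^ Suc B"
    by (simp add: algebra_simps)
  also have "\<dots> = x - x ^ (Suc B + 1)" using Suc.IH by (simp add: algebra_simps)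
  finally show ?case .
qed

lemma geom_le:
  fixes x :: real
  assumes "0 \<le> x" "x < 1"
  shows "(\<Sum>k=1..B. x ^ k) \<le> x / (1 - x)"
proof -
  have "(1 - x) * (\<Sum>k=1..B. x ^ k) \<le> x" using geom_id[of x B] assms by simp
  thus ?thesis using assms by (simp add: field_simps mult.commute)
qed

lemma mult_fact_ge:
  assumes "prime p" "p \<le> n"
  shows "real (multiplicity p (fact n :: nat)) \<ge> real n / real p - 1"
proof -
  have n1: "n \<ge> 1" using assms prime_ge_2_nat[OF assms(1)] by simp
  have "multiplicity p (fact n :: nat) = (\<Sum>k=1..n. n div p ^ k)"
    using legendre[OF assms(1), of n n] by simp
  also have "\<dots> \<ge> n div p ^ 1"
    by (rule member_le_sum) (use n1 in auto)
  finally have "multiplicity p (fact n :: nat) \<ge> n div p" by simp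
  hence "real (multiplicity p (fact n :: nat)) \<ge> real (n div p)" by simp
  moreover have "real (n div p) \<ge> real n / real p - 1"
  proof -
    have p0: "real p > 0" using prime_gt_0_nat[OF assms(1)] by simp
    have "n = p * (n div p) + n mod p" by simp
    hence "real n = real p * real (n div p) + real (n mod p)" by (metis of_nat_add of_nat_mult)
    moreover have "real (n mod p) < real p" using p0 by simp
    ultimately have "real n < real p * (real (n div p) + 1)" by (simp add: algebra_simps)
    thus ?thesis using p0 by (simp add: field_simps)
  qed
  ultimately show ?thesis by linarith
qed

lemma mult_fact_le:
  assumes "prime p"
  shows "real (multiplicity p (fact n :: nat)) \<le> real n / (real p - 1)"
proof -
  have p2: "real p \<ge> 2" using prime_ge_2_nat[OF assms] by simp
  have "real (multiplicity p (fact n :: nat)) = (\<Sum>k=1..n. real (n div p ^ k))"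
    using legendre[OF assms, of n n] by simp
  also have "\<dots> \<le> (\<Sum>k=1..n. real n * (1 / real p) ^ k)"
  proof (rule sum_mono)
    fix k
    have "(n div p ^ k) * p ^ k \<le> n" by (rule div_times_less_eq_dividend)
    hence "real (n div p ^ k) * real (p ^ k) \<le> real n" by (metis of_nat_le_iff of_nat_mult)
    moreover have "real (p ^ k) > 0" using prime_gt_0_nat[OF assms] by simp
    ultimately have "real (n div p ^ k) \<le> real n / real (p ^ k)" by (simp add: field_simps)
    thus "real (n div p ^ k) \<le> real n * (1 / real p) ^ k"
      by (simp add: power_one_over divide_inverse power_inverse)
  qed
  also have "\<dots> = real n * (\<Sum>k=1..n. (1 / real p) ^ k)" by (simp add: sum_distrib_left)
  also have "\<dots> \<le> real n * ((1 / real p) / (1 - 1 / real p))"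
    using p2 by (intro mult_left_mono geom_le) auto
  also have "\<dots> = real n / (real p - 1)" using p2 by (simp add: field_simps)
  finally show ?thesis .
qed

lemma Rs_upper:
  assumes "n \<ge> 1"
  shows "Rs n \<le> ln (real n) + ln 4 - 1 + (1 + ln (real n)) / real n"
proof -
  let ?P = "{p. prime p \<and> p \<le> n}"
  have "real n * Rs n - theta n = (\<Sum>p\<in>?P. (real n / real p - 1) * ln (real p))"
    unfolding Rs_def theta_def by (simp add: sum_distrib_left sum_subtractf[symmetric] algebra_simps)
  also have "\<dots> \<le> (\<Sum>p\<in>?P. real (multiplicity p (fact n :: nat)) * ln (real p))"
    by (intro sum_mono mult_right_mono mult_fact_ge) (auto simp: prime_gt_0_nat Suc_le_eq)
  also have "\<dots> = ln (fact n)" by (simp add: ln_fact_sum)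
  also have "\<dots> \<le> real n * ln (real n) - real n + 1 + ln (real n)" by (rule ln_fact_upper[OF assms])
  finally have "real n * Rs n \<le> real n * ln (real n) - real n + 1 + ln (real n) + real n * ln 4"
    using theta_le[of n] by linarith
  hence "Rs n \<le> (real n * ln (real n) - real n + 1 + ln (real n) + real n * ln 4) / real n"
    using assms by (simp add: field_simps)
  also have "\<dots> = ln (real n) + ln 4 - 1 + (1 + ln (real n)) / real n"
    using assms by (simp add: field_simps)
  finally show ?thesis .
qed

lemma Rs_lower:
  assumes "n \<ge> 1"
  shows "Rs n \<ge> ln (real n) - 1 - Ts n"
proof -
  let ?P = "{p. prime p \<and> p \<le> n}"
  have "real n * ln (real n) - real n + 1 \<le> ln (fact n)" by (rule ln_fact_lower[OF assms])
  also have "\<dots> = (\<Sum>p\<in>?P. real (multiplicity p (fact n :: nat)) * ln (real p))" by (simp add: ln_fact_sum)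
  also have "\<dots> \<le> (\<Sum>p\<in>?P. real n / (real p - 1) * ln (real p))"
    by (intro sum_mono mult_right_mono mult_fact_le) (auto simp: prime_gt_0_nat Suc_le_eq)
  also have "\<dots> = real n * (Rs n + Ts n)"
  proof -
    have "real n / (real p - 1) * ln (real p) = real n * (ln (real p) / real p + ln (real p) / (real p * (real p - 1)))"
      if "p \<in> ?P" for p
    proof -
      have "real p \<ge> 2" using that prime_ge_2_nat by auto
      thus ?thesis by (simp add: field_simps)
    qed
    hence "(\<Sum>p\<in>?P. real n / (real p - 1) * ln (real p)) =
       (\<Sum>p\<in>?P. real n * (ln (real p) / real p + ln (real p) / (real p * (real p - 1))))"
      by (intro sum.cong) auto
    thus ?thesis unfolding Rs_def Ts_def by (simp add: sum_distrib_left sum.distrib algebra_simps)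
  qed
  finally have "real n * (ln (real n) - 1) \<le> real n * (Rs n + Ts n)" by (simp add: algebra_simps)
  hence "ln (real n) - 1 \<le> Rs n + Ts n" using assms by simp
  thus ?thesis by simp
qed



lemma ln_ratio_le:
  fixes a b :: real assumes "a > 0" "b > 0"
  shows "ln a \<le> ln b + a / b - 1"
proof -
  have "ln (a / b) \<le> a / b - 1" using assms by (intro ln_le_minus_one) simp
  thus ?thesis using assms by (simp add: ln_div)
qed

lemma ln2_up: "ln (2::real) \<le> 25/36" by (rule ln2_le_25_over_36)
lemma ln2_lo: "ln (2::real) \<ge> 2/3" by (rule ln2_ge_two_thirds)

lemma ln4_eq: "ln (4::real) = 2 * ln 2"
proof -
  have "ln (4::real) = ln (2^2)" by simp
  thus ?thesis by (subst (asm) ln_realpow) simp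
qed

lemma ln8_eq: "ln (8::real) = 3 * ln 2"
proof -
  have "ln (8::real) = ln (2^3)" by simp
  thus ?thesis by (subst (asm) ln_realpow) simp
qed

lemma ln3_up: "ln (3::real) \<le> 2 * ln 2 - 1/4"
  using ln_ratio_le[of 3 4] ln4_eq by simp
lemma ln5_up: "ln (5::real) \<le> 2 * ln 2 + 1/4"
  using ln_ratio_le[of 5 4] ln4_eq by simp
lemma ln7_up: "ln (7::real) \<le> 3 * ln 2 - 1/8"
  using ln_ratio_le[of 7 8] ln8_eq by simp
lemma ln11_up: "ln (11::real) \<le> 3 * ln 2 + 3/8"
  using ln_ratio_le[of 11 8] ln8_eq by simp

lemma not_prime_of:
  fixes n d :: nat
  assumes "d dvd n" "1 < d" "d < n"
  shows "\<not> prime n"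
proof
  assume "prime n"
  hence "\<forall>m. m dvd n \<longrightarrow> m = 1 \<or> m = n" using prime_nat_iff by blast
  with assms show False by auto
qed

lemma small_primes: "prime (p::nat) \<Longrightarrow> p \<le> 11 \<Longrightarrow> p \<in> {2,3,5,7,11}"
proof -
  assume pp: "prime p" and le: "p \<le> 11"
  have ge: "p \<ge> 2" using prime_ge_2_nat[OF pp] .
  have n4: "\<not> prime (4::nat)" by (rule not_prime_of[of 2]) auto
  have n6: "\<not> prime (6::nat)" by (rule not_prime_of[of 2]) auto
  have n8: "\<not> prime (8::nat)" by (rule not_prime_of[of 2]) auto
  have n9: "\<not> prime (9::nat)" by (rule not_prime_of[of 3]) auto
  have n10: "\<not> prime (10::nat)" by (rule not_prime_of[of 2]) auto
  have "p = 2 \<or> p = 3 \<or> p = 4 \<or> p = 5 \<or> p = 6 \<or> p = 7 \<or> p = 8 \<or> p = 9 \<or> p = 10 \<or> p = 11"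
    using ge le by presburger
  thus ?thesis using pp n4 n6 n8 n9 n10 by auto
qed

definition gT :: "nat \<Rightarrow> real" where
  "gT m = ln (real m) / (real m * (real m - 1))"

definition fT :: "nat \<Rightarrow> real" where
  "fT m = (ln (real m) + 12/11) / real m"

lemma gT_nonneg: "m \<ge> 1 \<Longrightarrow> gT m \<ge> 0"
  unfolding gT_def by (intro divide_nonneg_nonneg mult_nonneg_nonneg) auto

lemma gT_step:
  assumes "n \<ge> 11"
  shows "gT (Suc n) \<le> fT n - fT (Suc n)"
proof -
  have n: "real n \<ge> 11" using assms by simp
  have key: "ln (real n + 1) - ln (real n) \<le> 1 / real n"
    using ln_ratio_le[of "real n + 1" "real n"] n by (simp add: field_simps)
  have "(real n + 1) * (ln (real n + 1) - ln (real n)) \<le> (real n + 1) * (1 / real n)"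
    by (rule mult_left_mono[OF key]) simp
  also have "\<dots> = (real n + 1) / real n" by simp
  also have "\<dots> \<le> 12/11" using n by (simp add: field_simps)
  finally have A: "(real n + 1) * (ln (real n + 1) - ln (real n)) \<le> 12/11" .
  have gen: "(L0 + c)/a - (L1 + c)/(a+1) - L1/((a+1)*(a+1-1)) = (c - (a+1)*(L1 - L0))/(a*(a+1))"
    if "a > 0" for a L0 L1 c :: real
  proof -
    have a1: "a + 1 \<noteq> 0" "a \<noteq> 0" using that by auto
    have e1: "(L0 + c)/a = ((L0+c)*(a+1))/(a*(a+1))" using a1 by simp
    have e2: "(L1 + c)/(a+1) = ((L1+c)*a)/(a*(a+1))" using a1 by simp
    have e3: "L1/((a+1)*(a+1-1)) = L1/(a*(a+1))" by (simp add: mult.commute)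
    have num: "(L0+c)*(a+1) - (L1+c)*a - L1 = c - (a+1)*(L1 - L0)" by (simp add: algebra_simps)
    have "(L0 + c)/a - (L1 + c)/(a+1) - L1/((a+1)*(a+1-1)) =
       ((L0+c)*(a+1))/(a*(a+1)) - ((L1+c)*a)/(a*(a+1)) - L1/(a*(a+1))"
      by (simp only: e1 e2 e3)
    also have "\<dots> = ((L0+c)*(a+1) - (L1+c)*a - L1)/(a*(a+1))"
      by (simp only: diff_divide_distrib)
    also have "\<dots> = (c - (a+1)*(L1 - L0))/(a*(a+1))" by (simp only: num)
    finally show ?thesis .
  qed
  have "fT n - fT (Suc n) - gT (Suc n) =
        (12/11 - (real n + 1) * (ln (real n + 1) - ln (real n))) / (real n * (real n + 1))"
    unfolding fT_def gT_def using gen[of "real n" "ln (real n)" "12/11" "ln (real n + 1)"] n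
    by (simp add: add.commute)
  also have "\<dots> \<ge> 0" using A n by (intro divide_nonneg_pos) auto
  finally show ?thesis by simp
qed

lemma tail_sum: "n \<ge> 11 \<Longrightarrow> (\<Sum>m=12..n. gT m) \<le> fT 11 - fT n"
proof (induction n rule: nat_induct_at_least)
  case base then show ?case by simp
next
  case (Suc n)
  have "(\<Sum>m=12..Suc n. gT m) = (\<Sum>m=12..n. gT m) + gT (Suc n)"
    using Suc by simp
  also have "\<dots> \<le> fT 11 - fT n + (fT n - fT (Suc n))"
    using Suc.IH gT_step[OF Suc.hyps] by linarith
  finally show ?case by simp
qed

lemma fT_nonneg: "n \<ge> 1 \<Longrightarrow> fT n \<ge> 0"
  unfolding fT_def by (intro divide_nonneg_pos add_nonneg_nonneg) auto

lemma tail_sum': "(\<Sum>m=12..n. gT m) \<le> fT 11"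
proof (cases "n \<ge> 11")
  case True
  then show ?thesis using tail_sum[OF True] fT_nonneg[of n] by linarith
next
  case False
  then show ?thesis using fT_nonneg[of 11] by simp
qed

lemma Ts_le: "Ts n \<le> 51/50"
proof -
  let ?P = "{p. prime p \<and> p \<le> n}"
  have sub: "?P \<subseteq> {2,3,5,7,11} \<union> {12..n}"
  proof
    fix p assume "p \<in> ?P"
    hence pp: "prime p" "p \<le> n" by auto
    show "p \<in> {2,3,5,7,11} \<union> {12..n}"
    proof (cases "p \<le> 11")
      case True thus ?thesis using small_primes[OF pp(1)] by blast
    next
      case False thus ?thesis using pp by simp
    qed
  qed
  have "Ts n = (\<Sum>p\<in>?P. gT p)" unfolding Ts_def gT_def by simp
  also have "\<dots> \<le> (\<Sum>p\<in>{2,3,5,7,11} \<union> {12..n}. gT p)"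
    by (rule sum_mono2) (use sub gT_nonneg in auto)
  also have "\<dots> \<le> (\<Sum>p\<in>{2,3,5,7,11}. gT p) + (\<Sum>p\<in>{12..n}. gT p)"
  proof -
    have "(\<Sum>p\<in>{2,3,5,7,11} \<union> {12..n}. gT p) = (\<Sum>p\<in>{2,3,5,7,11}. gT p) + (\<Sum>p\<in>{12..n}. gT p)
       - (\<Sum>p\<in>{2,3,5,7,11} \<inter> {12..n}. gT p)" by (rule sum_Un) auto
    moreover have "(\<Sum>p\<in>{2,3,5,7,11} \<inter> {12..n}. gT p) \<ge> 0" by (rule sum_nonneg) (use gT_nonneg in auto)
    ultimately show ?thesis by linarith
  qed
  also have "(\<Sum>p\<in>{2,3,5,7,11}. gT p) = gT 2 + gT 3 + gT 5 + gT 7 + gT 11" by simp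
  also have "\<dots> = ln 2 / 2 + ln 3 / 6 + ln 5 / 20 + ln 7 / 42 + ln 11 / 110"
    unfolding gT_def by simp
  finally have "Ts n \<le> ln 2 / 2 + ln 3 / 6 + ln 5 / 20 + ln 7 / 42 + ln 11 / 110 + fT 11"
    using tail_sum'[of n] by linarith
  moreover have "fT 11 = (ln 11 + 12/11) / 11" unfolding fT_def by simp
  ultimately show ?thesis using ln2_up ln3_up ln5_up ln7_up ln11_up by (simp add: field_simps)
qed



definition Sp :: "nat \<Rightarrow> real" where
  "Sp n = (\<Sum>p | prime p \<and> p \<le> n. 1 / real p)"

definition Em :: "nat \<Rightarrow> real" where
  "Em n = Sp n - ln (ln (real n))"

definition rr :: "nat \<Rightarrow> real" where
  "rr n = Rs n - ln (real n)"

definition Fm :: "nat \<Rightarrow> real" where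
  "Fm n = Em n - rr n / ln (real n)"

definition hh :: "nat \<Rightarrow> real" where
  "hh m = (ln (real m + 1) - ln (real m)) / ln (real m + 1) - (ln (ln (real m + 1)) - ln (ln (real m)))"

definition gg :: "nat \<Rightarrow> real" where
  "gg m = hh m + rr m * (1 / ln (real m) - 1 / ln (real m + 1))"

lemma primes_Suc:
  "{p. prime p \<and> p \<le> Suc m} = (if prime (Suc m) then insert (Suc m) {p. prime p \<and> p \<le> m} else {p. prime p \<and> p \<le> m})"
  by (auto simp: le_Suc_eq)

lemma Sp_Suc: "Sp (Suc m) = Sp m + (if prime (Suc m) then 1 / (real m + 1) else 0)"
  unfolding Sp_def by (subst primes_Suc) (auto simp: add.commute)

lemma Rs_Suc: "Rs (Suc m) = Rs m + (if prime (Suc m) then ln (real m + 1) / (real m + 1) else 0)"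
  unfolding Rs_def by (subst primes_Suc) (auto simp: add.commute)

lemma Fm_step:
  assumes "m \<ge> 2"
  shows "Fm (Suc m) = Fm m + gg m"
proof -
  have m: "real m \<ge> 2" using assms by simp
  have l0: "ln (real m) > 0" using m by simp
  have l1: "ln (real m + 1) > 0" using m by simp
  define P where "P = (if prime (Suc m) then 1::real else 0)"
  have S: "Sp (Suc m) = Sp m + P / (real m + 1)" unfolding P_def by (simp add: Sp_Suc)
  have R: "Rs (Suc m) = Rs m + P * ln (real m + 1) / (real m + 1)" unfolding P_def by (simp add: Rs_Suc)
  have "Fm (Suc m) = Sp m + P / (real m + 1) - ln (ln (real m + 1))
      - (Rs m + P * ln (real m + 1) / (real m + 1) - ln (real m + 1)) / ln (real m + 1)"
    unfolding Fm_def Em_def rr_def using S R by (simp add: add.commute)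
  also have "\<dots> = Sp m - ln (ln (real m + 1)) - Rs m / ln (real m + 1) + 1"
  proof -
    have gen: "S + P / M1 - Q - (R + P * L / M1 - L) / L = S - Q - R / L + 1"
      if "L \<noteq> 0" "M1 \<noteq> 0" for S P M1 Q R L :: real
      using that by (simp add: field_simps)
    show ?thesis using l1 m by (intro gen) auto
  qed
  also have "\<dots> = Fm m + gg m"
  proof -
    have gen: "S - Q1 - R / L1 + 1 = (S - Q0 - (R - L0) / L0) + (((L1 - L0) / L1 - (Q1 - Q0)) + (R - L0) * (1 / L0 - 1 / L1))"
      if "L0 \<noteq> 0" "L1 \<noteq> 0" for S Q0 Q1 R L0 L1 :: real
      using that by (simp add: field_simps)
    show ?thesis unfolding Fm_def Em_def rr_def gg_def hh_def using l0 l1 by (intro gen) auto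
  qed
  finally show ?thesis .
qed



lemma hh_bounds:
  assumes "m \<ge> 2"
  shows "hh m \<le> 0" "hh m \<ge> - 1 / (real m ^ 2 * ln (real m) ^ 2)"
proof -
  have m: "real m \<ge> 2" using assms by simp
  define L where "L = ln (real m)"
  define t where "t = ln (real m + 1) - ln (real m)"
  have L: "L > 0" unfolding L_def using m by simp
  have t0: "t > 0" unfolding t_def using m by simp
  have t1: "t \<le> 1 / real m"
    using ln_ratio_le[of "real m + 1" "real m"] m unfolding t_def by (simp add: field_simps)
  have e: "ln (real m + 1) = L + t" unfolding L_def t_def by simp
  have up: "ln (L + t) - ln L \<le> t / L"
    using ln_ratio_le[of "L + t" L] L t0 by (simp add: field_simps)
  have lo: "ln (L + t) - ln L \<ge> t / (L + t)"
    using ln_ratio_le[of L "L + t"] L t0 by (simp add: field_simps)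
  have hh_eq: "hh m = t / (L + t) - (ln (L + t) - ln L)"
    unfolding hh_def e by (simp add: L_def t_def)
  show "hh m \<le> 0" using hh_eq lo by simp
  have "t / (L + t) - t / L = - (t * t) / (L * (L + t))"
    using L t0 by (simp add: field_simps)
  also have "\<dots> \<ge> - (t * t) / (L * L)"
  proof -
    have "(t * t) / (L * (L + t)) \<le> (t * t) / (L * L)"
      using L t0 by (intro frac_le) (auto intro: mult_pos_pos mult_left_mono)
    thus ?thesis by simp
  qed
  finally have A: "hh m \<ge> - (t * t) / (L * L)" using hh_eq up by linarith
  have "t * t \<le> (1 / real m) * (1 / real m)" using t0 t1 by (intro mult_mono) auto
  hence "(t * t) / (L * L) \<le> ((1 / real m) * (1 / real m)) / (L * L)"
    using L by (intro divide_right_mono) auto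
  also have "\<dots> = 1 / (real m ^ 2 * ln (real m) ^ 2)" unfolding L_def by (simp add: power2_eq_square)
  finally show "hh m \<ge> - 1 / (real m ^ 2 * ln (real m) ^ 2)" using A by linarith
qed

lemma rr_lower: "m \<ge> 1 \<Longrightarrow> rr m \<ge> - 101/50"
  using Rs_lower[of m] Ts_le[of m] unfolding rr_def by linarith

lemma rr_upper: "m \<ge> 1 \<Longrightarrow> rr m \<le> ln 4 - 1 + (1 + ln (real m)) / real m"
  using Rs_upper[of m] unfolding rr_def by linarith

lemma rr_abs: "m \<ge> 1 \<Longrightarrow> \<bar>rr m\<bar> \<le> 3"
proof -
  assume m: "m \<ge> 1"
  have "ln (real m) \<le> real m - 1" using m by (intro ln_le_minus_one) simp
  hence "(1 + ln (real m)) / real m \<le> 1" using m by (simp add: field_simps)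
  thus ?thesis using rr_lower[OF m] rr_upper[OF m] ln4_eq ln2_up by (simp add: abs_le_iff)
qed

lemma inv_ln_dec: "m \<ge> 2 \<Longrightarrow> 1 / ln (real m) - 1 / ln (real m + 1) \<ge> 0"
proof -
  assume m: "m \<ge> 2"
  have "ln (real m) \<le> ln (real m + 1)" using m by simp
  moreover have "ln (real m) > 0" using m by simp
  ultimately show ?thesis by (simp add: frac_le)
qed

lemma gg_abs: "m \<ge> 2 \<Longrightarrow> \<bar>gg m\<bar> \<le> 3 * inverse (real m ^ 2) + 3 * (1 / ln (real m) - 1 / ln (real (Suc m)))"
proof -
  assume m: "m \<ge> 2"
  have l: "ln (real m) \<ge> 2/3"
  proof -
    have "ln 2 \<le> ln (real m)" using m by simp
    thus ?thesis using ln2_lo by linarith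
  qed
  have "1 / (real m ^ 2 * ln (real m) ^ 2) \<le> 3 * inverse (real m ^ 2)"
  proof -
    have "ln (real m) ^ 2 \<ge> (2/3)^2" using l by (intro power_mono) auto
    hence "1 / ln (real m) ^ 2 \<le> 1 / (2/3)^2" by (intro divide_left_mono) (use l in auto)
    moreover have "1 / (2/3::real)^2 \<le> 3" by (simp add: power2_eq_square)
    ultimately have "1 / ln (real m) ^ 2 \<le> 3" by linarith
    hence "inverse (real m ^ 2) * (1 / ln (real m) ^ 2) \<le> inverse (real m ^ 2) * 3"
      by (intro mult_left_mono) auto
    thus ?thesis by (simp add: field_simps)
  qed
  hence h: "\<bar>hh m\<bar> \<le> 3 * inverse (real m ^ 2)" using hh_bounds[OF m] by linarith
  have d: "1 / ln (real m) - 1 / ln (real m + 1) \<ge> 0" by (rule inv_ln_dec[OF m])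
  have "\<bar>rr m * (1 / ln (real m) - 1 / ln (real m + 1))\<bar> \<le> 3 * (1 / ln (real m) - 1 / ln (real m + 1))"
  proof -
    have "\<bar>rr m\<bar> * (1 / ln (real m) - 1 / ln (real m + 1)) \<le> 3 * (1 / ln (real m) - 1 / ln (real m + 1))"
      using rr_abs[of m] m d by (intro mult_right_mono) auto
    thus ?thesis using d by (simp add: abs_mult)
  qed
  thus ?thesis using h unfolding gg_def by (simp add: add.commute)
qed

lemma gg_summable: "summable gg"
proof (rule summable_comparison_test')
  show "summable (\<lambda>m. 3 * inverse (real m ^ 2) + 3 * (1 / ln (real m) - 1 / ln (real (Suc m))))"
  proof (intro summable_add summable_mult)
    show "summable (\<lambda>m. inverse (real m ^ 2))" by (rule inverse_power_summable) simp
    have "(\<lambda>m. 1 / ln (real m)) \<longlonglongrightarrow> 0" by real_asymp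
    thus "summable (\<lambda>m. 1 / ln (real m) - 1 / ln (real (Suc m)))"
      by (rule telescope_summable')
  qed
  fix m :: nat assume "m \<ge> 2"
  thus "norm (gg m) \<le> 3 * inverse (real m ^ 2) + 3 * (1 / ln (real m) - 1 / ln (real (Suc m)))"
    using gg_abs by simp
qed



lemma Fm_sum: "n \<ge> 2 \<Longrightarrow> Fm n = Fm 2 + (\<Sum>m\<in>{2..<n}. gg m)"
proof (induction n rule: nat_induct_at_least)
  case base then show ?case by simp
next
  case (Suc n) then show ?case using Fm_step[OF Suc.hyps] by simp
qed

definition LF :: real where
  "LF = Fm 2 - gg 0 - gg 1 + suminf gg"

lemma Fm_lim: "Fm \<longlonglongrightarrow> LF"
proof -
  have "(\<lambda>n. Fm 2 - gg 0 - gg 1 + (\<Sum>m<n. gg m)) \<longlonglongrightarrow> LF"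
    unfolding LF_def by (intro tendsto_add tendsto_const summable_LIMSEQ gg_summable)
  moreover have "eventually (\<lambda>n. Fm 2 - gg 0 - gg 1 + (\<Sum>m<n. gg m) = Fm n) sequentially"
  proof (rule eventually_sequentiallyI[of 2])
    fix n :: nat assume n: "n \<ge> 2"
    have "{..<n} = {0,1} \<union> {2..<n}" using n by auto
    hence "(\<Sum>m<n. gg m) = (\<Sum>m\<in>{0,1}. gg m) + (\<Sum>m\<in>{2..<n}. gg m)"
      by (simp only:) (rule sum.union_disjoint, auto)
    thus "Fm 2 - gg 0 - gg 1 + (\<Sum>m<n. gg m) = Fm n" using Fm_sum[OF n] by simp
  qed
  ultimately show ?thesis by (rule Lim_transform_eventually)
qed

lemma Em_lim: "Em \<longlonglongrightarrow> LF"
proof -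
  have "(\<lambda>n. rr n / ln (real n)) \<longlonglongrightarrow> 0"
  proof (rule Lim_null_comparison)
    show "eventually (\<lambda>n. norm (rr n / ln (real n)) \<le> 3 / ln (real n)) sequentially"
    proof (rule eventually_sequentiallyI[of 2])
      fix n :: nat assume n: "n \<ge> 2"
      have "ln (real n) > 0" using n by simp
      thus "norm (rr n / ln (real n)) \<le> 3 / ln (real n)"
        using rr_abs[of n] n by (simp add: abs_div divide_right_mono)
    qed
    show "(\<lambda>n. 3 / ln (real n)) \<longlonglongrightarrow> 0" by real_asymp
  qed
  hence "(\<lambda>n. Fm n + rr n / ln (real n)) \<longlonglongrightarrow> LF + 0" by (intro tendsto_add Fm_lim)
  moreover have "Fm n + rr n / ln (real n) = Em n" for n unfolding Fm_def by simp
  ultimately show ?thesis by simp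
qed

lemma gg_lower:
  assumes "x \<ge> 2" "y \<ge> x"
  shows "gg y \<ge> - (1 / ln (real x) ^ 2) * (1 / (real y - 1) - 1 / real y)
               - 101/50 * (1 / ln (real y) - 1 / ln (real y + 1))"
proof -
  have y: "y \<ge> 2" using assms by simp
  have ry: "real y \<ge> 2" using y by simp
  have lx: "ln (real x) > 0" using assms by simp
  have lxy: "ln (real x) \<le> ln (real y)" using assms by simp
  have d: "1 / ln (real y) - 1 / ln (real y + 1) \<ge> 0" by (rule inv_ln_dec[OF y])
  have r: "rr y * (1 / ln (real y) - 1 / ln (real y + 1)) \<ge> - 101/50 * (1 / ln (real y) - 1 / ln (real y + 1))"
    using rr_lower[of y] y d by (intro mult_right_mono) auto
  have "1 / (real y ^ 2 * ln (real y) ^ 2) \<le> (1 / ln (real x) ^ 2) * (1 / (real y - 1) - 1 / real y)"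
  proof -
    have e: "1 / (real y - 1) - 1 / real y = 1 / (real y * (real y - 1))" using ry by (simp add: field_simps)
    have "real y * (real y - 1) * ln (real x) ^ 2 \<le> real y ^ 2 * ln (real y) ^ 2"
    proof (rule mult_mono)
      show "real y * (real y - 1) \<le> real y ^ 2" using ry by (simp add: power2_eq_square algebra_simps)
      show "ln (real x) ^ 2 \<le> ln (real y) ^ 2" using lx lxy by (intro power_mono) auto
    qed (use ry in auto)
    moreover have "real y * (real y - 1) * ln (real x) ^ 2 > 0" using ry lx by simp
    ultimately have "1 / (real y ^ 2 * ln (real y) ^ 2) \<le> 1 / (real y * (real y - 1) * ln (real x) ^ 2)"
      by (intro divide_left_mono) auto
    also have "\<dots> = (1 / ln (real x) ^ 2) * (1 / (real y - 1) - 1 / real y)" unfolding e by simp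
    finally show ?thesis .
  qed
  thus ?thesis using hh_bounds(2)[OF y] r unfolding gg_def by linarith
qed

lemma Fm_tail:
  assumes x: "x \<ge> 2"
  shows "y \<ge> x \<Longrightarrow> Fm y \<ge> Fm x - 101/50 * (1 / ln (real x) - 1 / ln (real y))
              - (1 / ln (real x) ^ 2) * (1 / (real x - 1) - 1 / (real y - 1))"
proof (induction y rule: dec_induct)
  case base then show ?case by simp
next
  case (step y)
  have "Fm (Suc y) = Fm y + gg y" using Fm_step[of y] step x by simp
  also have "\<dots> \<ge> Fm x - 101/50 * (1 / ln (real x) - 1 / ln (real y))
              - (1 / ln (real x) ^ 2) * (1 / (real x - 1) - 1 / (real y - 1))
              - (1 / ln (real x) ^ 2) * (1 / (real y - 1) - 1 / real y)
               - 101/50 * (1 / ln (real y) - 1 / ln (real y + 1))"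
    using step.IH gg_lower[OF x step.hyps(1)] by linarith
  finally have A: "Fm (Suc y) \<ge> Fm x - 101/50 * (1 / ln (real x) - 1 / ln (real y))
              - (1 / ln (real x) ^ 2) * (1 / (real x - 1) - 1 / (real y - 1))
              - (1 / ln (real x) ^ 2) * (1 / (real y - 1) - 1 / real y)
               - 101/50 * (1 / ln (real y) - 1 / ln (real y + 1))" .
  have e1: "ln (real (Suc y)) = ln (real y + 1)" by (simp add: add.commute)
  have e2: "real (Suc y) - 1 = real y" by simp
  have d1: "(101/50::real) * (a - b) + 101/50 * (b - c) = 101/50 * (a - c)" for a b c :: real
    by (simp only: distrib_left[symmetric]) simp
  have d2: "(k::real) * (a - b) + k * (b - c) = k * (a - c)" for k a b c :: real
    by (simp add: algebra_simps)
  show ?case unfolding e1 e2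
    using A d1[of "1 / ln (real x)" "1 / ln (real y)" "1 / ln (real y + 1)"]
      d2[of "1 / ln (real x) ^ 2" "1 / (real x - 1)" "1 / (real y - 1)" "1 / real y"] by linarith
qed

lemma LF_lower:
  assumes x: "x \<ge> 2"
  shows "LF \<ge> Em x - (ln 4 + 51/50 + (1 + ln (real x)) / real x) / ln (real x)
              - 1 / ((real x - 1) * ln (real x) ^ 2)"
proof -
  have lx: "ln (real x) > 0" using x by simp
  have rx: "real x \<ge> 2" using x by simp
  have "LF \<ge> Fm x - 101/50 / ln (real x) - 1 / ((real x - 1) * ln (real x) ^ 2)"
  proof (rule LIMSEQ_le_const[OF Fm_lim], intro exI allI impI)
    fix y assume y: "y \<ge> x"
    have ly: "1 / ln (real y) \<ge> 0" using y x by simp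
    have ry: "1 / (real y - 1) \<ge> 0" using y x by simp
    have "1 / ln (real x) ^ 2 \<ge> 0" by simp
    hence "(1 / ln (real x) ^ 2) * (1 / (real x - 1) - 1 / (real y - 1)) \<le> (1 / ln (real x) ^ 2) * (1 / (real x - 1))"
      using ry by (intro mult_left_mono) auto
    also have "\<dots> = 1 / ((real x - 1) * ln (real x) ^ 2)" by simp
    finally have Q: "(1 / ln (real x) ^ 2) * (1 / (real x - 1) - 1 / (real y - 1)) \<le> 1 / ((real x - 1) * ln (real x) ^ 2)" .
    show "Fm x - 101/50 / ln (real x) - 1 / ((real x - 1) * ln (real x) ^ 2) \<le> Fm y"
    proof -
      have "101/50 * (1 / ln (real x) - 1 / ln (real y)) \<le> 101/50 / ln (real x)" using ly by simp
      thus ?thesis using Fm_tail[OF x y] Q by linarith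
    qed
  qed
  moreover have "Fm x \<ge> Em x - (ln 4 - 1 + (1 + ln (real x)) / real x) / ln (real x)"
    unfolding Fm_def using rr_upper[of x] x lx by (simp add: divide_right_mono)
  ultimately show ?thesis by (simp add: diff_divide_distrib add_divide_distrib)
qed



definition phi :: "real \<Rightarrow> real" where
  "phi x = (\<Sum>p | prime p \<and> real p \<le> x. 1 / real p) - ln (ln x)"

lemma le_nat_floor_iff:
  fixes x :: real assumes "x \<ge> 0"
  shows "(p \<le> nat \<lfloor>x\<rfloor>) = (real p \<le> x)"
proof -
  have "(p \<le> nat \<lfloor>x\<rfloor>) = (int p \<le> \<lfloor>x\<rfloor>)" using assms by (simp add: le_nat_iff)
  also have "\<dots> = (real_of_int (int p) \<le> x)" by (rule le_floor_iff)
  finally show ?thesis by simp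
qed

lemma phi_eq:
  assumes "x \<ge> 2"
  shows "phi x = Em (nat \<lfloor>x\<rfloor>) + (ln (ln (real (nat \<lfloor>x\<rfloor>))) - ln (ln x))"
proof -
  have "{p. prime p \<and> real p \<le> x} = {p. prime p \<and> p \<le> nat \<lfloor>x\<rfloor>}"
    using assms le_nat_floor_iff[of x] by auto
  thus ?thesis unfolding phi_def Em_def Sp_def by simp
qed

lemma lnln_floor:
  assumes "x \<ge> 3"
  shows "\<bar>ln (ln (real (nat \<lfloor>x\<rfloor>))) - ln (ln x)\<bar> \<le> 2 / (x - 1)"
proof -
  define n where "n = real (nat \<lfloor>x\<rfloor>)"
  have n1: "n \<le> x" "x < n + 1" unfolding n_def using assms by linarith+
  have n2: "n \<ge> 2" using assms n1 unfolding n_def by linarith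
  have ln0: "ln n \<ge> 2/3" using ln2_lo n2 by (smt (verit) ln_le_cancel_iff)
  have mono: "ln (ln n) \<le> ln (ln x)" using n1 n2 ln0 by simp
  have "ln (ln x) \<le> ln (ln n) + ln x / ln n - 1" using ln_ratio_le[of "ln x" "ln n"] ln0 n1 n2 by simp
  moreover have "ln x \<le> ln n + x / n - 1" using ln_ratio_le[of x n] n1 n2 by simp
  ultimately have "ln (ln x) - ln (ln n) \<le> (x / n - 1) / ln n" using ln0 by (simp add: field_simps)
  also have "\<dots> \<le> (1 / n) / (2/3)"
  proof (rule frac_le)
    have "x / n \<le> (n + 1) / n" using n1 n2 by (intro divide_right_mono) auto
    also have "\<dots> = 1 + 1 / n" using n2 by (simp add: field_simps)
    finally show "x / n - 1 \<le> 1 / n" by simp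
    show "0 \<le> 1 / n" using n2 by simp
  qed (use ln0 in auto)
  also have "\<dots> \<le> 2 / (x - 1)" using n1 n2 by (simp add: field_simps)
  finally show ?thesis using mono unfolding n_def by simp
qed

lemma phi_lim: "(phi \<longlongrightarrow> LF) at_top"
proof -
  have A: "((\<lambda>x::real. Em (nat \<lfloor>x\<rfloor>)) \<longlongrightarrow> LF) at_top"
  proof -
    have "filterlim (\<lambda>x::real. nat \<lfloor>x\<rfloor>) sequentially at_top"
      by (rule filterlim_compose[OF filterlim_nat_sequentially filterlim_floor_sequentially])
    from filterlim_compose[OF Em_lim this] show ?thesis by (simp add: o_def)
  qed
  have B: "((\<lambda>x::real. ln (ln (real (nat \<lfloor>x\<rfloor>))) - ln (ln x)) \<longlongrightarrow> 0) at_top"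
  proof (rule Lim_null_comparison)
    show "eventually (\<lambda>x. norm (ln (ln (real (nat \<lfloor>x\<rfloor>))) - ln (ln x)) \<le> 2 / (x - 1)) at_top"
      using eventually_ge_at_top[of "3::real"] by eventually_elim (metis lnln_floor real_norm_def)
    show "((\<lambda>x::real. 2 / (x - 1)) \<longlongrightarrow> 0) at_top" by real_asymp
  qed
  have "((\<lambda>x. Em (nat \<lfloor>x\<rfloor>) + (ln (ln (real (nat \<lfloor>x\<rfloor>))) - ln (ln x))) \<longlongrightarrow> LF + 0) at_top"
    by (intro tendsto_add A B)
  hence C: "((\<lambda>x. Em (nat \<lfloor>x\<rfloor>) + (ln (ln (real (nat \<lfloor>x\<rfloor>))) - ln (ln x))) \<longlongrightarrow> LF) at_top" by simp
  show ?thesis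
    by (rule Lim_transform_eventually[OF C]) (use eventually_ge_at_top[of "2::real"] in \<open>eventually_elim, simp add: phi_eq\<close>)
qed

lemma c1_eq: "mertens_c1 = LF"
proof -
  have "mertens_c1 = Lim at_top phi" unfolding mertens_c1_def phi_def by simp
  also have "\<dots> = LF" by (rule tendsto_Lim) (simp_all add: phi_lim)
  finally show ?thesis .
qed



lemma inf_primes: "infinite {p::nat. prime p}" using primes_infinite by simp

lemma pr_prime: "prime (pr l)"
  unfolding pr_def using enumerate_in_set[OF inf_primes] by simp

lemma pr_less_iff: "l \<ge> 1 \<Longrightarrow> l' \<ge> 1 \<Longrightarrow> pr l < pr l' \<longleftrightarrow> l < l'"
  unfolding pr_def using inf_primes by (simp del: One_nat_def) arith

lemma pr_le_iff: "l \<ge> 1 \<Longrightarrow> l' \<ge> 1 \<Longrightarrow> pr l \<le> pr l' \<longleftrightarrow> l \<le> l'"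
  unfolding pr_def using inf_primes by (simp del: One_nat_def) arith

lemma prime_is_pr: "prime p \<Longrightarrow> \<exists>l\<ge>1. pr l = p"
proof -
  assume "prime p"
  then obtain i where "enumerate {p. prime p} i = p"
    using enumerate_Ex[OF inf_primes] by blast
  hence "pr (Suc i) = p" unfolding pr_def by simp
  thus ?thesis by (intro exI[of _ "Suc i"]) simp
qed

lemma pr_inj: "inj_on pr {1..n}"
proof (rule inj_onI)
  fix a b assume "a \<in> {1..n}" "b \<in> {1..n}" "pr a = pr b"
  thus "a = b" using pr_le_iff[of a b] pr_le_iff[of b a] by auto
qed

lemma primes_upto_pr:
  assumes "n \<ge> 1"
  shows "{p. prime p \<and> p \<le> pr n} = pr ` {1..n}"
proof
  show "{p. prime p \<and> p \<le> pr n} \<subseteq> pr ` {1..n}"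
  proof
    fix p assume "p \<in> {p. prime p \<and> p \<le> pr n}"
    hence pp: "prime p" "p \<le> pr n" by auto
    then obtain l where l: "l \<ge> 1" "pr l = p" using prime_is_pr by blast
    hence "l \<le> n" using pp pr_le_iff[of l n] assms by simp
    thus "p \<in> pr ` {1..n}" using l by auto
  qed
  show "pr ` {1..n} \<subseteq> {p. prime p \<and> p \<le> pr n}"
    using pr_prime pr_le_iff by auto
qed

lemma Sp_pr: "n \<ge> 1 \<Longrightarrow> Sp (pr n) = (\<Sum>l\<in>{1..n}. 1 / real (pr l))"
proof -
  assume n: "n \<ge> 1"
  have "Sp (pr n) = (\<Sum>p\<in>pr ` {1..n}. 1 / real p)" unfolding Sp_def primes_upto_pr[OF n] by simp
  also have "\<dots> = (\<Sum>l\<in>{1..n}. 1 / real (pr l))" using sum.reindex[OF pr_inj[of n], of "\<lambda>p. 1 / real p"] by (simp add: o_def)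
  finally show ?thesis .
qed

lemma pr_upper:
  assumes "n \<ge> 1" "card {p. prime p \<and> p \<le> y} \<ge> n"
  shows "pr n \<le> y"
proof (rule ccontr)
  assume "\<not> pr n \<le> y"
  hence gt: "pr n > y" by simp
  have "{p. prime p \<and> p \<le> y} \<subseteq> pr ` {1..n-1}"
  proof
    fix p assume "p \<in> {p. prime p \<and> p \<le> y}"
    hence pp: "prime p" "p \<le> y" by auto
    then obtain l where l: "l \<ge> 1" "pr l = p" using prime_is_pr by blast
    hence "pr l < pr n" using pp gt by simp
    hence "l < n" using pr_less_iff[of l n] l assms by simp
    thus "p \<in> pr ` {1..n-1}" using l by auto
  qed
  hence "card {p. prime p \<and> p \<le> y} \<le> card (pr ` {1..n-1})" by (intro card_mono) auto
  also have "\<dots> \<le> n - 1" using card_image_le[of "{1..n-1}" pr] by simp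
  finally show False using assms by linarith
qed

lemma pr7: "pr 7 \<ge> 17"
proof (rule ccontr)
  assume "\<not> pr 7 \<ge> 17"
  hence le: "pr 7 \<le> 16" by simp
  have sub: "pr ` {1..7} \<subseteq> {2,3,5,7,11,13}"
  proof
    fix p assume "p \<in> pr ` {1..7}"
    then obtain l where l: "l \<in> {1..7}" "p = pr l" by auto
    hence pp: "prime p" using pr_prime by simp
    have "p \<le> 16" using l le pr_le_iff[of l 7] by auto
    have ge: "p \<ge> 2" using prime_ge_2_nat[OF pp] .
    have n4: "\<not> prime (4::nat)" by (rule not_prime_of[of 2]) auto
    have n6: "\<not> prime (6::nat)" by (rule not_prime_of[of 2]) auto
    have n8: "\<not> prime (8::nat)" by (rule not_prime_of[of 2]) auto
    have n9: "\<not> prime (9::nat)" by (rule not_prime_of[of 3]) auto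
    have n10: "\<not> prime (10::nat)" by (rule not_prime_of[of 2]) auto
    have n12: "\<not> prime (12::nat)" by (rule not_prime_of[of 2]) auto
    have n14: "\<not> prime (14::nat)" by (rule not_prime_of[of 2]) auto
    have n15: "\<not> prime (15::nat)" by (rule not_prime_of[of 3]) auto
    have n16: "\<not> prime (16::nat)" by (rule not_prime_of[of 2]) auto
    have "p = 2 \<or> p = 3 \<or> p = 4 \<or> p = 5 \<or> p = 6 \<or> p = 7 \<or> p = 8 \<or> p = 9 \<or> p = 10 \<or> p = 11
        \<or> p = 12 \<or> p = 13 \<or> p = 14 \<or> p = 15 \<or> p = 16"
      using ge \<open>p \<le> 16\<close> by presburger
    thus "p \<in> {2,3,5,7,11,13}" using pp n4 n6 n8 n9 n10 n12 n14 n15 n16 by auto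
  qed
  have "card (pr ` {1..7}) = 7" using card_image[OF pr_inj[of 7]] by simp
  moreover have "card (pr ` {1..7}) \<le> card {2,3,5,7,11,13::nat}" by (rule card_mono[OF _ sub]) simp
  ultimately show False by simp
qed



lemma div2_le: "(2*m) div q \<le> 2 * (m div q) + (if q \<le> 2*m then 1 else 0)" for m q :: nat
proof (cases "q \<le> 2*m \<and> q > 0")
  case False
  hence "q = 0 \<or> q > 2*m" by auto
  thus ?thesis by auto
next
  case True
  hence q: "q > 0" by simp
  have "m = q * (m div q) + m mod q" by simp
  hence "2*m = q * (2 * (m div q)) + 2 * (m mod q)" by (metis add_mult_distrib2 mult.left_commute)
  hence "(2*m) div q = 2 * (m div q) + (2 * (m mod q)) div q"
    using q by (metis div_mult_self2 add.commute less_numeral_extra(3) mult.commute)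
  moreover have "(2 * (m mod q)) div q \<le> 1"
  proof -
    have "2 * (m mod q) < 2 * q" using q by simp
    hence "(2 * (m mod q)) div q < 2" using q by (simp add: div_less_iff_less_mult)
    thus ?thesis by simp
  qed
  ultimately show ?thesis using True by simp
qed


lemma mult_binom_bound:
  assumes p: "prime p" and m: "m \<ge> 1"
  shows "p ^ multiplicity p ((2*m) choose m) \<le> 2*m"
proof (rule ccontr)
  define vc where "vc = multiplicity p ((2*m) choose m)"
  define K where "K = {k\<in>{1..2*m}. p ^ k \<le> 2*m}"
  assume "\<not> p ^ multiplicity p ((2*m) choose m) \<le> 2*m"
  hence big: "p ^ vc > 2*m" unfolding vc_def by simp
  have fe: "fact m * fact m * ((2*m) choose m) = (fact (2*m) :: nat)"
    using binomial_fact_lemma[of m "2*m"] by simp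
  have "multiplicity p (fact (2*m) :: nat) = multiplicity p (fact m :: nat) + multiplicity p (fact m :: nat) + vc"
    unfolding vc_def fe[symmetric] using p
    by (simp add: prime_elem_multiplicity_mult_distrib)
  moreover have "multiplicity p (fact (2*m) :: nat) = (\<Sum>k=1..2*m. (2*m) div p ^ k)"
    by (rule legendre[OF p]) simp
  moreover have "multiplicity p (fact m :: nat) = (\<Sum>k=1..2*m. m div p ^ k)"
    by (rule legendre[OF p]) simp
  ultimately have eq: "(\<Sum>k=1..2*m. (2*m) div p ^ k) = 2 * (\<Sum>k=1..2*m. m div p ^ k) + vc" by simp
  have "(\<Sum>k=1..2*m. (2*m) div p ^ k) \<le> (\<Sum>k=1..2*m. 2 * (m div p ^ k) + (if p ^ k \<le> 2*m then 1 else 0))"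
    by (intro sum_mono div2_le)
  also have "\<dots> = 2 * (\<Sum>k=1..2*m. m div p ^ k) + card K"
    unfolding K_def by (simp add: sum.distrib sum_distrib_left sum.If_cases Int_def conj_commute)
  finally have vcK: "vc \<le> card K" using eq by simp
  have "K \<subseteq> {1..vc - 1}"
  proof
    fix k assume "k \<in> K"
    hence k: "k \<ge> 1" "p ^ k \<le> 2*m" unfolding K_def by auto
    hence "p ^ k < p ^ vc" using big by simp
    hence "k < vc" using prime_gt_1_nat[OF p] by (simp add: power_strict_increasing_iff)
    thus "k \<in> {1..vc - 1}" using k by simp
  qed
  hence "card K \<le> vc - 1" using card_mono[of "{1..vc-1}" K] by simp
  moreover have "vc \<ge> 1" using big m by (cases vc) auto
  ultimately show False using vcK by linarith
qed

lemma binom_le_pow: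
  assumes m: "m \<ge> 1"
  shows "(2*m) choose m \<le> (2*m) ^ card {p. prime p \<and> p \<le> 2*m}"
proof -
  let ?C = "(2*m) choose m"
  have C0: "?C > 0" by simp
  have sub: "prime_factors ?C \<subseteq> {p. prime p \<and> p \<le> 2*m}"
  proof
    fix p assume "p \<in> prime_factors ?C"
    hence pp: "prime p" and pd: "p dvd ?C" by auto
    have fe: "fact m * fact m * ?C = (fact (2*m) :: nat)"
      using binomial_fact_lemma[of m "2*m"] by simp
    have "?C dvd fact (2*m)" by (metis dvd_triv_right fe)
    hence "p dvd fact (2*m)" using pd by (rule dvd_trans[rotated])
    thus "p \<in> {p. prime p \<and> p \<le> 2*m}" using prime_dvd_fact_iff[OF pp] pp by simp
  qed
  have "?C = (\<Prod>p\<in>prime_factors ?C. p ^ multiplicity p ?C)" by (rule prime_factorization_nat[OF C0])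
  also have "\<dots> \<le> (\<Prod>p\<in>prime_factors ?C. 2*m)"
    by (intro prod_mono) (auto intro!: mult_binom_bound m)
  also have "\<dots> = (2*m) ^ card (prime_factors ?C)" by simp
  also have "\<dots> \<le> (2*m) ^ card {p. prime p \<and> p \<le> 2*m}"
    using m by (intro power_increasing card_mono sub) auto
  finally show ?thesis .
qed

lemma pi_lower:
  assumes m: "m \<ge> 1" and cond: "real m * ln 4 \<ge> (real n + 1) * ln (2 * real m)"
  shows "card {p. prime p \<and> p \<le> 2*m} \<ge> n"
proof -
  define c where "c = card {p. prime p \<and> p \<le> 2*m}"
  have l2m: "ln (2 * real m) > 0" using m by simp
  have "4 ^ m / (2 * real m) \<le> real ((2*m) choose m)" by (rule central_binomial_lower_bound) (use m in simp)
  also have "\<dots> \<le> real ((2*m) ^ c)" unfolding c_def using binom_le_pow[OF m] by (simp only: of_nat_le_iff)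
  also have "\<dots> = (2 * real m) ^ c" by simp
  finally have A: "4 ^ m / (2 * real m) \<le> (2 * real m) ^ c" .
  have "ln (4 ^ m / (2 * real m)) \<le> ln ((2 * real m) ^ c)"
    using A m by (subst ln_le_cancel_iff) auto
  moreover have "ln ((2 * real m) ^ c) = real c * ln (2 * real m)" by (rule ln_realpow)
  moreover have "ln (4 ^ m / (2 * real m)) = real m * ln 4 - ln (2 * real m)"
    using m by (simp add: ln_div ln_realpow)
  ultimately have "real m * ln 4 - ln (2 * real m) \<le> real c * ln (2 * real m)" by simp
  hence "real n * ln (2 * real m) \<le> real c * ln (2 * real m)" using cond by (simp add: algebra_simps)
  hence "real n \<le> real c" using l2m by simp
  thus ?thesis unfolding c_def by simp
qed



lemma ln_n_facts:
  assumes n: "n \<ge> (7::nat)"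
  shows "ln (real n) \<ge> 37/21" "ln (ln (real n)) \<ge> 16/37" "ln (ln (real n)) \<le> ln (real n) - 1"
proof -
  have "ln (4::real) \<le> ln 7 + 4/7 - 1" using ln_ratio_le[of 4 7] by simp
  hence l7: "ln (7::real) \<ge> 37/21" using ln4_eq ln2_lo by linarith
  have "ln (7::real) \<le> ln (real n)" using n by simp
  thus l: "ln (real n) \<ge> 37/21" using l7 by linarith
  have "ln (1::real) \<le> ln (ln (real n)) + 1 / ln (real n) - 1"
    using ln_ratio_le[of 1 "ln (real n)"] l by simp
  moreover have "1 / ln (real n) \<le> 21/37" using l by (simp add: field_simps)
  ultimately show "ln (ln (real n)) \<ge> 16/37" by simp
  show "ln (ln (real n)) \<le> ln (real n) - 1" using l by (intro ln_le_minus_one) simp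
qed

lemma ln10_up: "ln (10::real) \<le> 3 * ln 2 + 1/4"
  using ln_ratio_le[of 10 8] ln8_eq by simp

lemma pr_upper_N:
  assumes n: "n \<ge> (7::nat)"
  defines "N \<equiv> real n * (ln (real n) + ln (ln (real n)))"
  shows "real (pr n) \<le> 5 * N"
proof -
  define l where "l = ln (real n)"
  define L where "L = l + ln l"
  have lf: "l \<ge> 37/21" "ln l \<ge> 16/37" "ln l \<le> l - 1" using ln_n_facts[OF n] unfolding l_def by auto
  have L2: "L \<ge> 2" unfolding L_def using lf by linarith
  have rn: "real n \<ge> 7" using n by simp
  have NL: "N = real n * L" unfolding N_def L_def l_def by simp
  have "real n * L \<ge> 7 * 2" using L2 rn by (intro mult_mono) auto
  hence N14: "N \<ge> 14" unfolding NL by simp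
  define m where "m = nat \<lceil>2 * N\<rceil>"
  have m1: "real m \<ge> 2 * N" "real m < 2 * N + 1" unfolding m_def using N14 by linarith+
  have m0: "m \<ge> 1" using m1 N14 by linarith
  have m5: "2 * real m \<le> 5 * N" using m1 N14 by linarith
  have lm: "ln (2 * real m) \<le> ln (5 * N)" using m5 m0 by simp
  have "ln (5 * N) = ln 5 + l + ln L" unfolding NL l_def using rn L2 by (simp add: ln_mult)
  also have "ln L \<le> ln (2 * l)" unfolding L_def using lf by simp
  also have "ln (2 * l) = ln 2 + ln l" using lf by (simp add: ln_mult)
  finally have "ln (5 * N) \<le> ln 5 + ln 2 + L" unfolding L_def by simp
  hence l5: "ln (2 * real m) \<le> ln 10 + L"
  proof -
    have "ln (10::real) = ln 5 + ln 2" using ln_mult_pos[of 5 2] by simp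
    thus ?thesis using lm \<open>ln (5 * N) \<le> ln 5 + ln 2 + L\<close> by linarith
  qed
  have ln10: "ln (10::real) \<le> 7/3" using ln10_up ln2_up by linarith
  have ln4: "ln (4::real) \<ge> 4/3" using ln4_eq ln2_lo by linarith
  have "(real n + 1) * ln (2 * real m) \<le> (real n + 1) * (ln 10 + L)"
    using l5 rn by (intro mult_left_mono) auto
  also have "\<dots> \<le> (8/7 * real n) * (ln 10 + L)"
    using rn L2 ln10 by (intro mult_right_mono) (auto simp: ln_ge_zero)
  also have "\<dots> = real n * (8/7 * (ln 10 + L))" by simp
  also have "\<dots> \<le> real n * (2 * L * (4/3))"
    using rn L2 ln10 by (intro mult_left_mono) auto
  also have "\<dots> \<le> real n * (2 * L * ln 4)"
    using rn L2 ln4 by (intro mult_left_mono) auto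
  also have "\<dots> = 2 * N * ln 4" unfolding NL by simp
  also have "\<dots> \<le> real m * ln 4" using m1 ln4 by (intro mult_right_mono) auto
  finally have cond: "real m * ln 4 \<ge> (real n + 1) * ln (2 * real m)" .
  have "card {p. prime p \<and> p \<le> 2*m} \<ge> n" by (rule pi_lower[OF m0 cond])
  hence "pr n \<le> 2 * m" using n by (intro pr_upper) auto
  hence "real (pr n) \<le> 2 * real m" by simp
  thus ?thesis using m5 by linarith
qed

lemma pr_ge17: "n \<ge> 7 \<Longrightarrow> pr n \<ge> 17"
  using pr7 pr_le_iff[of 7 n] by simp

definition dlt :: "real \<Rightarrow> real" where
  "dlt x = ln 4 + 51/50 + (1 + ln x) / x + 1 / ((x - 1) * ln x)"

lemma ln17: "ln (17::real) \<ge> 109/40" "ln (17::real) \<le> 57/20"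
proof -
  have l16: "ln (16::real) = 4 * ln 2"
  proof -
    have "ln (16::real) = ln (2^4)" by simp
    thus ?thesis by (subst (asm) ln_realpow) simp
  qed
  have "ln (16::real) \<le> ln 17 + 16/17 - 1" using ln_ratio_le[of 16 17] by simp
  thus "ln (17::real) \<ge> 109/40" using l16 ln2_lo by linarith
  have "ln (17::real) \<le> ln 16 + 17/16 - 1" using ln_ratio_le[of 17 16] by simp
  thus "ln (17::real) \<le> 57/20" using l16 ln2_up by linarith
qed

lemma dlt_bounds:
  assumes x: "x \<ge> 17"
  shows "dlt x \<le> 27/10" "dlt x \<le> ln x"
proof -
  have l17: "ln x \<ge> ln 17" using x by simp
  have lx: "ln x \<ge> 109/40" using l17 ln17 by linarith
  have "ln x \<le> ln 17 + x / 17 - 1" using ln_ratio_le[of x 17] x by simp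
  hence "(1 + ln x) / x \<le> (ln 17 + x / 17) / x" using x by (intro divide_right_mono) auto
  also have "\<dots> = ln 17 / x + 1/17" using x by (simp add: field_simps)
  also have "ln 17 / x \<le> ln 17 / 17" using x ln17 by (intro divide_left_mono) auto
  finally have A0: "(1 + ln x) / x \<le> ln 17 / 17 + 1/17" by simp
  have A: "(1 + ln x) / x \<le> 57/20/17 + 1/17" using A0 ln17 by linarith
  have "(x - 1) * ln x \<ge> 16 * (109/40)" using x lx by (intro mult_mono) auto
  hence B: "1 / ((x - 1) * ln x) \<le> 1 / (16 * (109/40))" by (intro divide_left_mono) auto
  have ln4: "ln (4::real) \<le> 25/18" using ln4_eq ln2_up by linarith
  have A': "(1 + ln x) / x \<le> 77/340" using A by simp
  have B': "1 / ((x - 1) * ln x) \<le> 5/218" using B by simp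
  show "dlt x \<le> 27/10" unfolding dlt_def using A' B' ln4 by linarith
  thus "dlt x \<le> ln x" using lx by linarith
qed

lemma core:
  fixes u v w d :: real
  assumes "u > 0" "v > 0" "w > 0" "w \<le> v" "d \<le> u" "d \<le> 5" "d \<ge> 0"
    and "u \<le> v \<or> u - v + d \<le> 5"
  shows "ln u + d / u \<le> ln v + 5 / w"
proof -
  have vw: "5 / v \<le> 5 / w" using assms by (intro divide_left_mono) auto
  show ?thesis
  proof (cases "u \<le> v")
    case True
    have lu: "ln u \<le> ln v + u / v - 1" using ln_ratio_le[of u v] assms by simp
    have "(u - d) * (v - u) + u * (5 - d) \<ge> 0" using assms True by (intro add_nonneg_nonneg mult_nonneg_nonneg) auto
    hence "d * v \<le> u * v - u * u + 5 * u" by (simp add: algebra_simps)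
    hence "(d * v) / (u * v) \<le> (u * v - u * u + 5 * u) / (u * v)"
      using assms by (intro divide_right_mono) auto
    moreover have "(d * v) / (u * v) = d / u" using assms by simp
    moreover have "(u * v - u * u + 5 * u) / (u * v) = 1 - u / v + 5 / v" using assms by (simp add: field_simps)
    ultimately have "d / u \<le> 1 - u / v + 5 / v" by simp
    thus ?thesis using lu vw by linarith
  next
    case False
    hence c: "u - v + d \<le> 5" using assms by simp
    have lu: "ln u \<le> ln v + u / v - 1" using ln_ratio_le[of u v] assms by simp
    have "d / u \<le> d / v" using assms False by (intro divide_left_mono) auto
    moreover have "u / v - 1 + d / v = (u - v + d) / v" using assms by (simp add: field_simps)
    moreover have "(u - v + d) / v \<le> 5 / v" using c assms by (intro divide_right_mono) auto
    ultimately show ?thesis using lu vw by linarith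
  qed
qed



theorem mainTheorem9:
  fixes j k :: nat
  assumes "j \<ge> 1" and "k \<ge> 6" and "k + 1 \<ge> j"
  shows "A_prod j k < C_bound j k"
proof -
  define n where "n = k + 1"
  have n7: "n \<ge> 7" unfolding n_def using assms by simp
  have jn: "j \<in> {1..n}" unfolding n_def using assms by simp
  have rn: "real n = real k + 1" unfolding n_def by simp
  define x where "x = pr n"
  have x17: "x \<ge> 17" unfolding x_def using pr_ge17[OF n7] .
  have rx: "real x \<ge> 17" using x17 by simp
  define u where "u = ln (real x)"
  define l where "l = ln (real n)"
  define N where "N = real n * (l + ln l)"
  define M where "M = real n * (l + ln l - 1)"
  define v where "v = ln N"
  define w where "w = ln M"
  have lf: "l \<ge> 37/21" "ln l \<ge> 16/37" "ln l \<le> l - 1" using ln_n_facts[OF n7] unfolding l_def by auto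
  have rn7: "real n \<ge> 7" using n7 by simp
  have M2: "M \<ge> 7 * 1" unfolding M_def using rn7 lf by (intro mult_mono) auto
  have MN: "M \<le> N" unfolding M_def N_def using rn7 by simp
  have w0: "w > 0" unfolding w_def using M2 by simp
  have wv: "w \<le> v" unfolding w_def v_def using M2 MN by simp
  have v0: "v > 0" using w0 wv by simp
  have u0: "u > 0" unfolding u_def using rx by simp
  define d where "d = dlt (real x)"
  have d1: "d \<le> 27/10" "d \<le> u" unfolding d_def u_def using dlt_bounds[OF rx] by auto
  have d0: "d \<ge> 0"
  proof -
    have "ln (4::real) \<ge> 0" by simp
    moreover have "(1 + ln (real x)) / real x \<ge> 0" using rx by simp
    moreover have "1 / ((real x - 1) * ln (real x)) \<ge> 0" using rx by simp
    ultimately show ?thesis unfolding d_def dlt_def by linarith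
  qed
  have case2: "u \<le> v \<or> u - v + d \<le> 5"
  proof -
    have xN: "real x \<le> 5 * N" unfolding x_def N_def l_def using pr_upper_N[OF n7] by simp
    have N0: "N > 0" using MN M2 by simp
    have "u \<le> ln (5 * N)" unfolding u_def using xN rx by simp
    also have "ln (5 * N) = ln 5 + v" unfolding v_def using N0 by (simp add: ln_mult)
    finally have "u - v \<le> ln 5" by simp
    moreover have "ln (5::real) \<le> 2 * ln 2 + 1/4" by (rule ln5_up)
    ultimately show ?thesis using d1 ln2_up by linarith
  qed
  have core': "ln u + d / u \<le> ln v + 5 / w"
    by (rule core) (use u0 v0 w0 wv d1 d0 case2 in auto)
  have x2: "x \<ge> 2" using x17 by simp
  have c1: "mertens_c1 \<ge> Em x - d / u"
  proof -
    have lx: "ln (real x) > 0" using rx by simp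
    have "1 / ((real x - 1) * ln (real x) ^ 2) = (1 / ((real x - 1) * ln (real x))) / ln (real x)"
      by (simp add: power2_eq_square)
    hence "(ln 4 + 51/50 + (1 + ln (real x)) / real x) / ln (real x) + 1 / ((real x - 1) * ln (real x) ^ 2)
           = d / u" unfolding d_def dlt_def u_def by (simp add: add_divide_distrib)
    thus ?thesis using LF_lower[OF x2] c1_eq by linarith
  qed
  have Sp_eq: "Sp x = Em x + ln u" unfolding Em_def u_def by simp
  have key: "Sp x \<le> ln v + mertens_c1 + 5 / w" using Sp_eq c1 core' by linarith
  define I where "I = {1..n} - {j}"
  have finI: "finite I" unfolding I_def by simp
  have neI: "I \<noteq> {}"
  proof -
    have "(if j = 1 then 2 else 1) \<in> I" unfolding I_def using n7 by auto
    thus ?thesis by auto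
  qed
  have pos: "real (pr l') > 0" for l' using prime_gt_0_nat[OF pr_prime[of l']] by simp
  have AI: "A_prod j k = (\<Prod>l\<in>I. (real (pr l) + 1) / real (pr l))"
    unfolding A_prod_def I_def n_def by simp
  have lnA: "ln (A_prod j k) = (\<Sum>l\<in>I. ln (1 + 1 / real (pr l)))"
  proof -
    have "ln (A_prod j k) = (\<Sum>l\<in>I. ln ((real (pr l) + 1) / real (pr l)))"
    proof -
      have "(real (pr i) + 1) / real (pr i) \<noteq> 0" for i
      proof -
        have "(real (pr i) + 1) / real (pr i) > 0" using pos[of i] by simp
        thus ?thesis by linarith
      qed
      thus ?thesis unfolding AI by (intro ln_prod[OF finI])
    qed
    also have "\<dots> = (\<Sum>l\<in>I. ln (1 + 1 / real (pr l)))"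
      by (intro sum.cong refl) (use pos in \<open>simp add: field_simps\<close>)
    finally show ?thesis .
  qed
  have "(\<Sum>l\<in>I. ln (1 + 1 / real (pr l))) < (\<Sum>l\<in>I. 1 / real (pr l))"
    by (rule sum_strict_mono[OF finI neI]) (use pos in \<open>auto intro: ln_add_one_self_less_self\<close>)
  also have "(\<Sum>l\<in>I. 1 / real (pr l)) = Sp x - 1 / real (pr j)"
  proof -
    have "(\<Sum>l\<in>{1..n}. 1 / real (pr l)) = 1 / real (pr j) + (\<Sum>l\<in>I. 1 / real (pr l))"
      unfolding I_def using jn by (simp add: sum.remove)
    thus ?thesis using Sp_pr[of n] n7 unfolding x_def by simp
  qed
  finally have lnA_lt: "ln (A_prod j k) < Sp x - 1 / real (pr j)" using lnA by simp
  have Apos: "A_prod j k > 0" unfolding AI using pos by (intro prod_pos) (simp add: add_pos_pos)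
  have "A_prod j k = exp (ln (A_prod j k))" using Apos by simp
  also have "\<dots> < exp (Sp x - 1 / real (pr j))" using lnA_lt by simp
  also have "\<dots> \<le> exp (ln v + (mertens_c1 - 1 / real (pr j) + 5 / w))" using key by simp
  also have "\<dots> = v * exp (mertens_c1 - 1 / real (pr j) + 5 / w)" using v0 by (simp add: exp_add)
  also have "\<dots> = C_bound j k"
    unfolding C_bound_def v_def w_def N_def M_def l_def rn by simp
  finally show ?thesis .
qed


end
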